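(* Let $\mathcal A$ be a $\sigma$-structure with universe $A$ and let $\mathfrak C$ be the class of all $(\sigma\cup\sigma_A)$-structures $\mathcal C$ for which $\{P_a^{\mathcal C}: a\in A\}$ is a partition of the universe of $\mathcal C$. Then $\mathsf d_{\mathcal A}=\Omega(\mathsf d_{\mathcal A^{\mathrm{id}},\mathfrak C})$.
   Context: $\sigma_A=\{P_a: a\in A\}$ is a set of new unary relation symbols, and the individualisation $\mathcal A^{\mathrm{id}}$ is the $(\sigma\cup\sigma_A)$-expansion of $\mathcal A$ with $P_a^{\mathcal A^{\mathrm{id}}}=\{a\}$. For structures $\mathcal A,\mathcal B$, $\mathsf d(\mathcal A,\mathcal B)$ is the minimum size $\|C\|$ (number of gates plus wires) of a d-representation $C$ of $\operatorname{Hom}(\mathcal A,\mathcal B)$; for a class $\mathfrak C$, $\mathsf d_{\mathcal A,\mathfrak C}(m)=\max\{\mathsf d(\mathcal A,\mathcal C):\mathcal C\in\mathfrak C,\|\mathcal C\|\le m\}$ with $\|\mathcal C\|=\sum_R|R^{\mathcal C}|$, and $\mathsf d_{\mathcal A}$ abbreviates $\mathsf d_{\mathcal A,\mathfrak C}$ for $\mathfrak C$ the class of all structures of the signature of $\mathcal A$. All structures are assumed connected. A factorisation circuit $C$ for finite sets $A,B$ is a finite directed acyclic graph with a unique sink $s$; input gates (no incoming edges) are labelled $\{a\mapsto b\}$, other nodes $\cup$ or $\times$; $\operatorname{dom}(g)$ is $\{a\}$ for an input gate and the union of the children's domains otherwise; $C$ is well-defined if each $\cup$-gate has the same domain as each child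 and children of each $\times$-gate have pairwise disjoint domains; then $S_g=\{\{a\mapsto b\}\}$ for inputs, the union of the children's sets for $\cup$-gates, and $\{h_1\cup\dots\cup h_r:h_i\in S_{g_i}\}$ for $\times$-gates, $S_C=S_s$. A d-representation of $\operatorname{Hom}(\mathcal A,\mathcal B)$ is a well-defined factorisation circuit with $S_C=\operatorname{Hom}(\mathcal A,\mathcal B)$. *)

theory Defs
  imports Main "HOL-Library.Landau_Symbols"
begin

record ('u, 'r) struct =
  univ :: "'u set"
  rel  :: "'r \<Rightarrow> 'u list set"

definition is_struct :: "'r set \<Rightarrow> ('r \<Rightarrow> nat) \<Rightarrow> ('u, 'r) struct \<Rightarrow> bool" where
  "is_struct Sig ar S \<longleftrightarrow>
     finite (univ S) \<and>
     (\<forall>R. rel S R \<subseteq> {t. length t = ar R \<and> set t \<subseteq> univ S}) \<and>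
     (\<forall>R. R \<notin> Sig \<longrightarrow> rel S R = {})"

definition ssize :: "'r set \<Rightarrow> ('u, 'r) struct \<Rightarrow> nat" where
  "ssize Sig S = (\<Sum>R\<in>Sig. card (rel S R))"

definition gaifman :: "('u, 'r) struct \<Rightarrow> ('u \<times> 'u) set" where
  "gaifman S = {(x, y). \<exists>R. \<exists>t\<in>rel S R. x \<in> set t \<and> y \<in> set t}"

definition connected_struct :: "('u, 'r) struct \<Rightarrow> bool" where
  "connected_struct S \<longleftrightarrow> univ S \<noteq> {} \<and>
     (\<forall>x\<in>univ S. \<forall>y\<in>univ S. (x, y) \<in> (gaifman S)\<^sup>*)"

definition is_hom :: "('a, 'r) struct \<Rightarrow> ('b, 'r) struct \<Rightarrow> ('a \<Rightarrow> 'b) \<Rightarrow> bool" where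
  "is_hom A B h \<longleftrightarrow> h ` univ A \<subseteq> univ B \<and>
     (\<forall>R. \<forall>t\<in>rel A R. map h t \<in> rel B R)"

definition Hom :: "('a, 'r) struct \<Rightarrow> ('b, 'r) struct \<Rightarrow> ('a \<times> 'b) set set" where
  "Hom A B = {{(a, h a) | a. a \<in> univ A} | h. is_hom A B h}"

text \<open>Signature sigma plus sigma_A: old symbols Inl R, new unary symbols P_a = Inr a.\<close>
definition sig_id :: "'r set \<Rightarrow> 'a set \<Rightarrow> ('r + 'a) set" where
  "sig_id Sig A = Inl ` Sig \<union> Inr ` A"

definition ar_id :: "('r \<Rightarrow> nat) \<Rightarrow> ('r + 'a) \<Rightarrow> nat" where
  "ar_id ar = case_sum ar (\<lambda>_. 1)"

definition indiv :: "('a, 'r) struct \<Rightarrow> ('a, 'r + 'a) struct" where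
  "indiv A = \<lparr> univ = univ A,
              rel = (\<lambda>S. case S of Inl R \<Rightarrow> rel A R
                                  | Inr a \<Rightarrow> (if a \<in> univ A then {[a]} else {})) \<rparr>"

definition Pset :: "('u, 'r + 'a) struct \<Rightarrow> 'a \<Rightarrow> 'u set" where
  "Pset C a = {x. [x] \<in> rel C (Inr a)}"

datatype ('a, 'b) glab = Inp 'a 'b | UnionG | ProdG

text \<open>Gates are natural numbers; ch g is the set of children of g (wires c \<rightarrow> g).\<close>
record ('a, 'b) fcirc =
  gates :: "nat set"
  ch    :: "nat \<Rightarrow> nat set"
  lab   :: "nat \<Rightarrow> ('a, 'b) glab"
  sink  :: nat

definition is_inp :: "('a, 'b) glab \<Rightarrow> bool" where
  "is_inp l \<longleftrightarrow> (\<exists>a b. l = Inp a b)"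

definition fcircuit :: "('a, 'b) fcirc \<Rightarrow> bool" where
  "fcircuit C \<longleftrightarrow>
     finite (gates C) \<and> sink C \<in> gates C \<and>
     (\<forall>g\<in>gates C. ch C g \<subseteq> gates C) \<and>
     (\<forall>g\<in>gates C. ch C g = {} \<longleftrightarrow> is_inp (lab C g)) \<and>
     acyclic {(c, g). g \<in> gates C \<and> c \<in> ch C g} \<and>
     (\<forall>g\<in>gates C. sink C \<notin> ch C g) \<and>
     (\<forall>g\<in>gates C. g \<noteq> sink C \<longrightarrow> (\<exists>g'\<in>gates C. g \<in> ch C g'))"

definition csize :: "('a, 'b) fcirc \<Rightarrow> nat" where
  "csize C = card (gates C) + (\<Sum>g\<in>gates C. card (ch C g))"

inductive cdom :: "('a, 'b) fcirc \<Rightarrow> nat \<Rightarrow> 'a set \<Rightarrow> bool" for C where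
  cdom_inp: "g \<in> gates C \<Longrightarrow> lab C g = Inp a b \<Longrightarrow> cdom C g {a}"
| cdom_gate: "g \<in> gates C \<Longrightarrow> \<not> is_inp (lab C g) \<Longrightarrow>
     (\<And>c. c \<in> ch C g \<Longrightarrow> cdom C c (D c)) \<Longrightarrow> cdom C g (\<Union>c\<in>ch C g. D c)"

definition gdom :: "('a, 'b) fcirc \<Rightarrow> nat \<Rightarrow> 'a set" where
  "gdom C g = (THE D. cdom C g D)"

definition well_defined :: "('a, 'b) fcirc \<Rightarrow> bool" where
  "well_defined C \<longleftrightarrow> (\<forall>g\<in>gates C.
     (lab C g = UnionG \<longrightarrow> (\<forall>c\<in>ch C g. gdom C c = gdom C g)) \<and>
     (lab C g = ProdG \<longrightarrow> (\<forall>c1\<in>ch C g. \<forall>c2\<in>ch C g. c1 \<noteq> c2 \<longrightarrow>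
                               gdom C c1 \<inter> gdom C c2 = {})))"

text \<open>Sets S_g of partial maps (represented as sets of pairs) computed by the gates.\<close>
inductive csem :: "('a, 'b) fcirc \<Rightarrow> nat \<Rightarrow> ('a \<times> 'b) set set \<Rightarrow> bool" for C where
  csem_inp: "g \<in> gates C \<Longrightarrow> lab C g = Inp a b \<Longrightarrow> csem C g {{(a, b)}}"
| csem_un: "g \<in> gates C \<Longrightarrow> lab C g = UnionG \<Longrightarrow>
     (\<And>c. c \<in> ch C g \<Longrightarrow> csem C c (S c)) \<Longrightarrow> csem C g (\<Union>c\<in>ch C g. S c)"
| csem_prod: "g \<in> gates C \<Longrightarrow> lab C g = ProdG \<Longrightarrow>
     (\<And>c. c \<in> ch C g \<Longrightarrow> csem C c (S c)) \<Longrightarrow>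
     csem C g {(\<Union>c\<in>ch C g. f c) | f. \<forall>c\<in>ch C g. f c \<in> S c}"

definition circ_set :: "('a, 'b) fcirc \<Rightarrow> ('a \<times> 'b) set set" where
  "circ_set C = (THE S. csem C (sink C) S)"

definition drep :: "('a, 'b) fcirc \<Rightarrow> ('a, 'r) struct \<Rightarrow> ('b, 'r) struct \<Rightarrow> bool" where
  "drep C A B \<longleftrightarrow> fcircuit C \<and> well_defined C \<and> circ_set C = Hom A B"

text \<open>d(A,B): minimum size of a d-representation of Hom(A,B)
  (convention: 0 if none exists, which only happens when Hom(A,B) is empty).\<close>
definition dsize :: "('a, 'r) struct \<Rightarrow> ('b, 'r) struct \<Rightarrow> nat" where
  "dsize A B = (if \<exists>C :: ('a, 'b) fcirc. drep C A B
                then LEAST n. \<exists>C :: ('a, 'b) fcirc. drep C A B \<and> csize C = n else 0)"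

text \<open>d_{A,K}(m) for a class K of (finite) structures with universes in nat;
  the maximum is taken as a supremum over a finite set of values.\<close>
definition dclass :: "'r set \<Rightarrow> ('a, 'r) struct \<Rightarrow> (nat, 'r) struct set \<Rightarrow> nat \<Rightarrow> nat" where
  "dclass Sig A K m = Sup {dsize A C | C. C \<in> K \<and> ssize Sig C \<le> m}"

definition all_structs :: "'r set \<Rightarrow> ('r \<Rightarrow> nat) \<Rightarrow> (nat, 'r) struct set" where
  "all_structs Sig ar = {C. is_struct Sig ar C \<and> connected_struct C}"

definition part_class :: "'r set \<Rightarrow> ('r \<Rightarrow> nat) \<Rightarrow> 'a set \<Rightarrow> (nat, 'r + 'a) struct set" where
  "part_class Sig ar A = {C. is_struct (sig_id Sig A) (ar_id ar) C \<and> connected_struct C \<and>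
      (\<forall>a\<in>A. Pset C a \<noteq> {}) \<and>
      (\<forall>a\<in>A. \<forall>a'\<in>A. a \<noteq> a' \<longrightarrow> Pset C a \<inter> Pset C a' = {}) \<and>
      (\<Union>a\<in>A. Pset C a) = univ C}"

end

theory Submission
  imports Defs "HOL-Library.Nat_Bijection"
begin

definition cE :: "('a, 'b) fcirc \<Rightarrow> (nat \<times> nat) set" where
  "cE C = {(c, g). g \<in> gates C \<and> c \<in> ch C g}"

lemma fc_ch: "fcircuit C \<Longrightarrow> g \<in> gates C \<Longrightarrow> c \<in> ch C g \<Longrightarrow> c \<in> gates C"
  unfolding fcircuit_def by blast

lemma cE_I: "g \<in> gates C \<Longrightarrow> c \<in> ch C g \<Longrightarrow> (c, g) \<in> cE C"
  unfolding cE_def by simp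

lemma fc_inp: "fcircuit C \<Longrightarrow> g \<in> gates C \<Longrightarrow> (ch C g = {}) = is_inp (lab C g)"
  unfolding fcircuit_def by blast

lemma wf_cE: "fcircuit C \<Longrightarrow> wf (cE C)"
proof -
  assume f: "fcircuit C"
  have "cE C \<subseteq> gates C \<times> gates C" using fc_ch[OF f] unfolding cE_def by blast
  hence "finite (cE C)" using f unfolding fcircuit_def by (meson finite_SigmaI finite_subset)
  moreover have "acyclic (cE C)" using f unfolding fcircuit_def cE_def by simp
  ultimately show ?thesis by (rule finite_acyclic_wf)
qed

lemma csem_unique: "csem C g S1 \<Longrightarrow> csem C g S2 \<Longrightarrow> S1 = S2"
proof (induction arbitrary: S2 rule: csem.induct)
  case (csem_inp g a b)
  from csem_inp.prems show ?case
  proof cases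
    case (csem_inp a' b')
    thus ?thesis using \<open>lab C g = Inp a b\<close> by simp
  next
    case (csem_un S)
    thus ?thesis using \<open>lab C g = Inp a b\<close> by simp
  next
    case (csem_prod S)
    thus ?thesis using \<open>lab C g = Inp a b\<close> by simp
  qed
next
  case (csem_un g S)
  note IH = csem_un.IH and L = \<open>lab C g = UnionG\<close>
  from csem_un.prems show ?case
  proof cases
    case (csem_inp a' b')
    thus ?thesis using L by simp
  next
    case (csem_un S')
    have "\<And>c. c \<in> ch C g \<Longrightarrow> S c = S' c" using IH csem_un by blast
    then show ?thesis using csem_un(1) by (metis SUP_cong)
  next
    case (csem_prod S')
    thus ?thesis using L by simp
  qed
next
  case (csem_prod g S)
  note IH = csem_prod.IH and L = \<open>lab C g = ProdG\<close>
  from csem_prod.prems show ?case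
  proof cases
    case (csem_inp a' b')
    thus ?thesis using L by simp
  next
    case (csem_un S')
    thus ?thesis using L by simp
  next
    case (csem_prod S')
    have e: "\<And>c. c \<in> ch C g \<Longrightarrow> S c = S' c" using IH csem_prod by blast
    show ?thesis unfolding csem_prod(1)
      apply (rule Collect_cong) using e by (metis (no_types, lifting))
  qed
qed

lemma cdom_unique: "cdom C g S1 \<Longrightarrow> cdom C g S2 \<Longrightarrow> S1 = S2"
proof (induction arbitrary: S2 rule: cdom.induct)
  case (cdom_inp g a b)
  note L = \<open>lab C g = Inp a b\<close>
  from cdom_inp.prems show ?case
  proof cases
    case (cdom_inp a' b')
    thus ?thesis using L by simp
  next
    case (cdom_gate D')
    thus ?thesis using L by (simp add: is_inp_def)
  qed
next
  case (cdom_gate g D)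
  note IH = cdom_gate.IH and L = \<open>\<not> is_inp (lab C g)\<close>
  from cdom_gate.prems show ?case
  proof cases
    case (cdom_inp a' b')
    thus ?thesis using L by (simp add: is_inp_def)
  next
    case (cdom_gate D')
    have "\<And>c. c \<in> ch C g \<Longrightarrow> D c = D' c" using IH cdom_gate by blast
    then show ?thesis using cdom_gate(1) by (metis SUP_cong)
  qed
qed

lemma glab_cases: "(\<And>a b. l = Inp a b \<Longrightarrow> P) \<Longrightarrow> (l = UnionG \<Longrightarrow> P) \<Longrightarrow> (l = ProdG \<Longrightarrow> P) \<Longrightarrow> P"
  by (cases l) auto

lemma csem_exists:
  assumes f: "fcircuit C" and g: "g \<in> gates C"
  shows "\<exists>S. csem C g S"
  using g
proof (induction g rule: wf_induct[OF wf_cE[OF f]])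
  case (1 g)
  have IH: "\<And>c. c \<in> ch C g \<Longrightarrow> \<exists>S. csem C c S"
    using 1 f cE_I fc_ch by metis
  define S where "S c = (SOME S. csem C c S)" for c
  have Sc: "\<And>c. c \<in> ch C g \<Longrightarrow> csem C c (S c)" unfolding S_def using IH by (meson someI_ex)
  show ?case
  proof (rule glab_cases[of "lab C g"])
    fix a b assume l: "lab C g = Inp a b"
    have "csem C g {{(a,b)}}" using 1(2) l by (rule csem_inp)
    thus ?thesis ..
  next
    assume l: "lab C g = UnionG"
    have "csem C g (\<Union>c\<in>ch C g. S c)" using 1(2) l Sc by (rule csem_un)
    thus ?thesis ..
  next
    assume l: "lab C g = ProdG"
    have "csem C g {(\<Union>c\<in>ch C g. f c) | f. \<forall>c\<in>ch C g. f c \<in> S c}" using 1(2) l Sc by (rule csem_prod)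
    thus ?thesis ..
  qed
qed

lemma cdom_exists:
  assumes f: "fcircuit C" and g: "g \<in> gates C"
  shows "\<exists>S. cdom C g S"
  using g
proof (induction g rule: wf_induct[OF wf_cE[OF f]])
  case (1 g)
  have IH: "\<And>c. c \<in> ch C g \<Longrightarrow> \<exists>S. cdom C c S"
    using 1 f cE_I fc_ch by metis
  define S where "S c = (SOME S. cdom C c S)" for c
  have Sc: "\<And>c. c \<in> ch C g \<Longrightarrow> cdom C c (S c)" unfolding S_def using IH by (meson someI_ex)
  show ?case
  proof (cases "is_inp (lab C g)")
    case True
    then obtain a b where l: "lab C g = Inp a b" unfolding is_inp_def by blast
    have "cdom C g {a}" using 1(2) l by (rule cdom_inp)
    thus ?thesis ..
  next
    case False
    have "cdom C g (\<Union>c\<in>ch C g. S c)" using 1(2) False Sc by (rule cdom_gate)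
    thus ?thesis ..
  qed
qed

definition sem where "sem C g = (THE S. csem C g S)"

lemma sem_eq: "csem C g S \<Longrightarrow> sem C g = S"
  unfolding sem_def by (rule the_equality, assumption, erule csem_unique, assumption)

lemma csem_sem: "fcircuit C \<Longrightarrow> g \<in> gates C \<Longrightarrow> csem C g (sem C g)"
proof -
  assume "fcircuit C" "g \<in> gates C"
  then obtain S where S: "csem C g S" using csem_exists by blast
  have "sem C g = S" using S by (rule sem_eq)
  thus ?thesis using S by simp
qed

lemma gdom_eq: "cdom C g S \<Longrightarrow> gdom C g = S"
  unfolding gdom_def by (rule the_equality, assumption, erule cdom_unique, assumption)

lemma cdom_gdom: "fcircuit C \<Longrightarrow> g \<in> gates C \<Longrightarrow> cdom C g (gdom C g)"
proof -
  assume "fcircuit C" "g \<in> gates C"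
  then obtain S where S: "cdom C g S" using cdom_exists by blast
  have "gdom C g = S" using S by (rule gdom_eq)
  thus ?thesis using S by simp
qed

lemma circ_set_sem: "circ_set C = sem C (sink C)"
  unfolding circ_set_def sem_def ..

lemma sem_inp: "fcircuit C \<Longrightarrow> g \<in> gates C \<Longrightarrow> lab C g = Inp a b \<Longrightarrow> sem C g = {{(a,b)}}"
  by (rule sem_eq, rule csem_inp)

lemma sem_un: "fcircuit C \<Longrightarrow> g \<in> gates C \<Longrightarrow> lab C g = UnionG \<Longrightarrow>
    sem C g = (\<Union>c\<in>ch C g. sem C c)"
  apply (rule sem_eq, rule csem_un, assumption+)
  using csem_sem unfolding fcircuit_def by blast

lemma sem_prod: "fcircuit C \<Longrightarrow> g \<in> gates C \<Longrightarrow> lab C g = ProdG \<Longrightarrow>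
    sem C g = {(\<Union>c\<in>ch C g. f c) | f. \<forall>c\<in>ch C g. f c \<in> sem C c}"
  apply (rule sem_eq, rule csem_prod, assumption+)
  using csem_sem unfolding fcircuit_def by blast

lemma gdom_gate: "fcircuit C \<Longrightarrow> g \<in> gates C \<Longrightarrow> \<not> is_inp (lab C g) \<Longrightarrow>
    gdom C g = (\<Union>c\<in>ch C g. gdom C c)"
  apply (rule gdom_eq, rule cdom_gate, assumption+)
  using cdom_gdom unfolding fcircuit_def by blast

lemma sem_nonempty:
  assumes f: "fcircuit C" and g: "g \<in> gates C"
  shows "sem C g \<noteq> {}"
  using g
proof (induction g rule: wf_induct[OF wf_cE[OF f]])
  case (1 g)
  have IH: "\<And>c. c \<in> ch C g \<Longrightarrow> sem C c \<noteq> {}"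
    using 1 f cE_I fc_ch by metis
  show ?case
  proof (rule glab_cases[of "lab C g"])
    fix a b assume "lab C g = Inp a b" thus ?thesis using 1 f sem_inp by fastforce
  next
    assume u: "lab C g = UnionG"
    hence "ch C g \<noteq> {}" using fc_inp[OF f 1(2)] unfolding is_inp_def by simp
    thus ?thesis using sem_un[OF f 1(2) u] IH by auto
  next
    assume p: "lab C g = ProdG"
    define h where "h c = (SOME x. x \<in> sem C c)" for c
    have "\<forall>c\<in>ch C g. h c \<in> sem C c" unfolding h_def using IH by (simp add: some_in_eq)
    thus ?thesis using sem_prod[OF f 1(2) p] by blast
  qed
qed


definition Sf :: "('a, 'b) fcirc \<Rightarrow> ('a \<times> 'b) set \<Rightarrow> nat \<Rightarrow> ('a \<times> 'b) set set" where
  "Sf C OK g = {G \<in> sem C g. G \<subseteq> OK}"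

definition alive :: "('a, 'b) fcirc \<Rightarrow> ('a \<times> 'b) set \<Rightarrow> nat \<Rightarrow> bool" where
  "alive C OK g \<longleftrightarrow> g \<in> gates C \<and> Sf C OK g \<noteq> {}"

definition rE :: "('a, 'b) fcirc \<Rightarrow> ('a \<times> 'b) set \<Rightarrow> (nat \<times> nat) set" where
  "rE C OK = {(c, g). g \<in> gates C \<and> c \<in> ch C g \<and> alive C OK c \<and> alive C OK g}"

definition rcirc :: "('a, 'b) fcirc \<Rightarrow> ('a \<times> 'b) set \<Rightarrow> ('a, 'b) fcirc" where
  "rcirc C OK = C\<lparr>gates := {g. (g, sink C) \<in> (rE C OK)\<^sup>*}, ch := (\<lambda>g. {c \<in> ch C g. alive C OK c})\<rparr>"

lemma rc_simps:
  "gates (rcirc C OK) = {g. (g, sink C) \<in> (rE C OK)\<^sup>*}"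
  "ch (rcirc C OK) g = {c \<in> ch C g. alive C OK c}"
  "lab (rcirc C OK) = lab C"
  "sink (rcirc C OK) = sink C"
  unfolding rcirc_def by simp_all

lemma Sf_inp: "fcircuit C \<Longrightarrow> g \<in> gates C \<Longrightarrow> lab C g = Inp a b \<Longrightarrow>
    Sf C OK g = (if (a, b) \<in> OK then {{(a, b)}} else {})"
  unfolding Sf_def using sem_inp[of C g a b] by auto

lemma Sf_un: "fcircuit C \<Longrightarrow> g \<in> gates C \<Longrightarrow> lab C g = UnionG \<Longrightarrow>
    Sf C OK g = (\<Union>c\<in>ch C g. Sf C OK c)"
  unfolding Sf_def using sem_un[of C g] by auto

lemma Sf_prod:
  assumes "fcircuit C" "g \<in> gates C" "lab C g = ProdG"
  shows "Sf C OK g = {(\<Union>c\<in>ch C g. f c) | f. \<forall>c\<in>ch C g. f c \<in> Sf C OK c}"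
proof -
  have e: "sem C g = {(\<Union>c\<in>ch C g. f c) | f. \<forall>c\<in>ch C g. f c \<in> sem C c}"
    using sem_prod[OF assms] .
  show ?thesis
  proof (intro equalityI subsetI)
    fix G assume "G \<in> Sf C OK g"
    hence G: "G \<in> sem C g" "G \<subseteq> OK" unfolding Sf_def by auto
    have "\<exists>f. G = (\<Union>c\<in>ch C g. f c) \<and> (\<forall>c\<in>ch C g. f c \<in> sem C c)"
      using G(1) unfolding e by (simp only: mem_Collect_eq)
    then obtain f where f: "G = (\<Union>c\<in>ch C g. f c)" "\<forall>c\<in>ch C g. f c \<in> sem C c"
      by blast
    have "\<forall>c\<in>ch C g. f c \<in> Sf C OK c" using f G(2) unfolding Sf_def by blast
    thus "G \<in> {(\<Union>c\<in>ch C g. f c) | f. \<forall>c\<in>ch C g. f c \<in> Sf C OK c}"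
      unfolding f(1) by (intro CollectI exI[of _ f] conjI refl)
  next
    fix G assume "G \<in> {(\<Union>c\<in>ch C g. f c) | f. \<forall>c\<in>ch C g. f c \<in> Sf C OK c}"
    hence "\<exists>f. G = (\<Union>c\<in>ch C g. f c) \<and> (\<forall>c\<in>ch C g. f c \<in> Sf C OK c)"
      by (simp only: mem_Collect_eq)
    then obtain f where f: "G = (\<Union>c\<in>ch C g. f c)" "\<forall>c\<in>ch C g. f c \<in> Sf C OK c" by blast
    have f2: "\<forall>c\<in>ch C g. f c \<in> sem C c" using f(2) unfolding Sf_def by blast
    have "G \<in> sem C g" unfolding e f(1) using f2 by (intro CollectI exI[of _ f] conjI refl)
    moreover have "G \<subseteq> OK" using f unfolding Sf_def by blast
    ultimately show "G \<in> Sf C OK g" unfolding Sf_def by blast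
  qed
qed

lemma rgates_alive:
  assumes s: "alive C OK (sink C)" and g: "g \<in> gates (rcirc C OK)"
  shows "alive C OK g"
proof -
  have "(g, sink C) \<in> (rE C OK)\<^sup>*" using g rc_simps by blast
  thus ?thesis
  proof (cases rule: converse_rtranclE)
    case base thus ?thesis using s by simp
  next
    case (step y) thus ?thesis unfolding rE_def by blast
  qed
qed

lemma rch_gates:
  assumes s: "alive C OK (sink C)" and g: "g \<in> gates (rcirc C OK)"
    and c: "c \<in> ch (rcirc C OK) g" and f: "fcircuit C"
  shows "c \<in> gates (rcirc C OK)"
proof -
  have ag: "alive C OK g" using rgates_alive[OF s g] .
  have "(c, g) \<in> rE C OK" using ag c unfolding rE_def rc_simps alive_def by blast
  moreover have "(g, sink C) \<in> (rE C OK)\<^sup>*" using g rc_simps by blast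
  ultimately have "(c, sink C) \<in> (rE C OK)\<^sup>*" by (rule converse_rtrancl_into_rtrancl)
  thus ?thesis using rc_simps by blast
qed

lemma rgates_sub: "alive C OK (sink C) \<Longrightarrow> gates (rcirc C OK) \<subseteq> gates C"
  using rgates_alive unfolding alive_def by blast

lemma alive_un_child:
  assumes f: "fcircuit C" and a: "alive C OK g" and l: "lab C g = UnionG"
  shows "\<exists>c\<in>ch C g. alive C OK c"
proof -
  have g: "g \<in> gates C" using a alive_def by blast
  have "Sf C OK g \<noteq> {}" using a alive_def by blast
  then obtain c where c: "c \<in> ch C g" "Sf C OK c \<noteq> {}" using Sf_un[OF f g l] by auto
  have "c \<in> gates C" using fc_ch[OF f g c(1)] .
  thus ?thesis using c unfolding alive_def by blast
qed

lemma alive_prod_child: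
  assumes f: "fcircuit C" and a: "alive C OK g" and l: "lab C g = ProdG" and c: "c \<in> ch C g"
  shows "alive C OK c"
proof -
  have g: "g \<in> gates C" using a alive_def by blast
  have "Sf C OK g \<noteq> {}" using a alive_def by blast
  then obtain h where "\<forall>c\<in>ch C g. h c \<in> Sf C OK c" using Sf_prod[OF f g l] by auto
  hence "Sf C OK c \<noteq> {}" using c by blast
  moreover have "c \<in> gates C" using fc_ch[OF f g c] .
  ultimately show ?thesis unfolding alive_def by blast
qed

lemma rcirc_fcircuit:
  assumes f: "fcircuit C" and s: "alive C OK (sink C)"
  shows "fcircuit (rcirc C OK)"
proof -
  let ?R = "rcirc C OK"
  have sub: "gates ?R \<subseteq> gates C" using rgates_sub[OF s] .
  have fin: "finite (gates ?R)" using sub f unfolding fcircuit_def by (meson finite_subset)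
  have sk: "sink ?R \<in> gates ?R" unfolding rc_simps by simp
  have chs: "\<forall>g\<in>gates ?R. ch ?R g \<subseteq> gates ?R" using rch_gates[OF s _ _ f] by blast
  have inp: "\<forall>g\<in>gates ?R. ch ?R g = {} \<longleftrightarrow> is_inp (lab ?R g)"
  proof
    fix g assume gR: "g \<in> gates ?R"
    have g: "g \<in> gates C" using gR sub by blast
    have ag: "alive C OK g" using rgates_alive[OF s gR] .
    show "ch ?R g = {} \<longleftrightarrow> is_inp (lab ?R g)"
    proof (rule glab_cases[of "lab C g"])
      fix a b assume l: "lab C g = Inp a b"
      hence "ch C g = {}" using fc_inp[OF f g] unfolding is_inp_def by blast
      thus ?thesis using l unfolding rc_simps is_inp_def by simp
    next
      assume l: "lab C g = UnionG"
      then obtain c where "c \<in> ch C g" "alive C OK c" using alive_un_child[OF f ag] by blast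
      hence "ch ?R g \<noteq> {}" unfolding rc_simps by blast
      thus ?thesis using l unfolding rc_simps is_inp_def by simp
    next
      assume l: "lab C g = ProdG"
      hence "ch C g \<noteq> {}" using fc_inp[OF f g] unfolding is_inp_def by simp
      then obtain c where "c \<in> ch C g" by blast
      hence "ch ?R g \<noteq> {}" using alive_prod_child[OF f ag l] unfolding rc_simps by blast
      thus ?thesis using l unfolding rc_simps is_inp_def by simp
    qed
  qed
  have acyc: "acyclic {(c, g). g \<in> gates ?R \<and> c \<in> ch ?R g}"
  proof (rule acyclic_subset)
    show "acyclic {(c, g). g \<in> gates C \<and> c \<in> ch C g}" using f unfolding fcircuit_def by blast
    show "{(c, g). g \<in> gates ?R \<and> c \<in> ch ?R g} \<subseteq> {(c, g). g \<in> gates C \<and> c \<in> ch C g}"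
      using sub unfolding rc_simps by blast
  qed
  have nsk: "\<forall>g\<in>gates ?R. sink ?R \<notin> ch ?R g"
  proof
    fix g assume "g \<in> gates ?R"
    hence "g \<in> gates C" using sub by blast
    hence "sink C \<notin> ch C g" using f unfolding fcircuit_def by blast
    thus "sink ?R \<notin> ch ?R g" unfolding rc_simps by blast
  qed
  have par: "\<forall>g\<in>gates ?R. g \<noteq> sink ?R \<longrightarrow> (\<exists>g'\<in>gates ?R. g \<in> ch ?R g')"
  proof (intro ballI impI)
    fix g assume gR: "g \<in> gates ?R" and ns: "g \<noteq> sink ?R"
    have "(g, sink C) \<in> (rE C OK)\<^sup>*" using gR rc_simps by blast
    thus "\<exists>g'\<in>gates ?R. g \<in> ch ?R g'"
    proof (cases rule: converse_rtranclE)
      case base thus ?thesis using ns by (simp add: rc_simps)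
    next
      case (step y)
      have "y \<in> gates ?R" using step(2) rc_simps by blast
      moreover have "g \<in> ch ?R y" using step(1) unfolding rE_def rc_simps by blast
      ultimately show ?thesis by blast
    qed
  qed
  show ?thesis unfolding fcircuit_def using fin sk chs inp acyc nsk par by blast
qed

lemma rcirc_csem:
  assumes f: "fcircuit C" and s: "alive C OK (sink C)" and gR: "g \<in> gates (rcirc C OK)"
  shows "csem (rcirc C OK) g (Sf C OK g)"
  using gR
proof (induction g rule: wf_induct[OF wf_cE[OF f]])
  case (1 g)
  let ?R = "rcirc C OK"
  have sub: "gates ?R \<subseteq> gates C" using rgates_sub[OF s] .
  have g: "g \<in> gates C" using 1(2) sub by blast
  have ag: "alive C OK g" using rgates_alive[OF s 1(2)] .
  have IH: "\<And>c. c \<in> ch ?R g \<Longrightarrow> csem ?R c (Sf C OK c)"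
  proof -
    fix c assume c: "c \<in> ch ?R g"
    have "c \<in> ch C g" using c rc_simps by blast
    hence "(c, g) \<in> cE C" using g cE_I by blast
    moreover have "c \<in> gates ?R" using rch_gates[OF s 1(2) c f] .
    ultimately show "csem ?R c (Sf C OK c)" using 1(1) by blast
  qed
  show ?case
  proof (rule glab_cases[of "lab C g"])
    fix a b assume l: "lab C g = Inp a b"
    have "Sf C OK g \<noteq> {}" using ag alive_def by blast
    hence e: "Sf C OK g = {{(a,b)}}" using Sf_inp[OF f g l, of OK] by (simp split: if_splits)
    have l': "lab ?R g = Inp a b" by (simp add: rc_simps l)
    have "csem ?R g {{(a,b)}}" using 1(2) l' by (rule csem_inp)
    thus ?thesis using e by simp
  next
    assume l: "lab C g = UnionG"
    have l': "lab ?R g = UnionG" by (simp add: rc_simps l)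
    have "csem ?R g (\<Union>c\<in>ch ?R g. Sf C OK c)" using 1(2) l' IH by (rule csem_un)
    moreover have "(\<Union>c\<in>ch ?R g. Sf C OK c) = Sf C OK g"
    proof -
      have "(\<Union>c\<in>ch ?R g. Sf C OK c) = (\<Union>c\<in>ch C g. Sf C OK c)"
      proof (intro equalityI subsetI)
        fix x assume "x \<in> (\<Union>c\<in>ch ?R g. Sf C OK c)"
        thus "x \<in> (\<Union>c\<in>ch C g. Sf C OK c)" unfolding rc_simps by blast
      next
        fix x assume "x \<in> (\<Union>c\<in>ch C g. Sf C OK c)"
        then obtain c where c: "c \<in> ch C g" "x \<in> Sf C OK c" by blast
        have "alive C OK c" using c fc_ch[OF f g c(1)] unfolding alive_def by blast
        thus "x \<in> (\<Union>c\<in>ch ?R g. Sf C OK c)" using c unfolding rc_simps by blast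
      qed
      thus ?thesis using Sf_un[OF f g l] by simp
    qed
    ultimately show ?thesis by simp
  next
    assume l: "lab C g = ProdG"
    have l': "lab ?R g = ProdG" by (simp add: rc_simps l)
    have chq: "ch ?R g = ch C g" using alive_prod_child[OF f ag l] unfolding rc_simps by blast
    have "csem ?R g {(\<Union>c\<in>ch ?R g. h c) | h. \<forall>c\<in>ch ?R g. h c \<in> Sf C OK c}" using 1(2) l' IH by (rule csem_prod)
    thus ?thesis using Sf_prod[OF f g l, of OK] chq by simp
  qed
qed

lemma rcirc_cdom:
  assumes f: "fcircuit C" and w: "well_defined C" and s: "alive C OK (sink C)"
    and gR: "g \<in> gates (rcirc C OK)"
  shows "cdom (rcirc C OK) g (gdom C g)"
  using gR
proof (induction g rule: wf_induct[OF wf_cE[OF f]])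
  case (1 g)
  let ?R = "rcirc C OK"
  have sub: "gates ?R \<subseteq> gates C" using rgates_sub[OF s] .
  have g: "g \<in> gates C" using 1(2) sub by blast
  have ag: "alive C OK g" using rgates_alive[OF s 1(2)] .
  have IH: "\<And>c. c \<in> ch ?R g \<Longrightarrow> cdom ?R c (gdom C c)"
  proof -
    fix c assume c: "c \<in> ch ?R g"
    have "c \<in> ch C g" using c rc_simps by blast
    hence "(c, g) \<in> cE C" using g cE_I by blast
    moreover have "c \<in> gates ?R" using rch_gates[OF s 1(2) c f] .
    ultimately show "cdom ?R c (gdom C c)" using 1(1) by blast
  qed
  show ?case
  proof (cases "is_inp (lab C g)")
    case True
    then obtain a b where l: "lab C g = Inp a b" unfolding is_inp_def by blast
    have l': "lab ?R g = Inp a b" by (simp add: rc_simps l)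
    have "cdom ?R g {a}" using 1(2) l' by (rule cdom_inp)
    moreover have "cdom C g {a}" using g l by (rule cdom_inp)
    hence "gdom C g = {a}" by (rule gdom_eq)
    ultimately show ?thesis by simp
  next
    case False
    have l': "\<not> is_inp (lab ?R g)" using False by (simp add: rc_simps)
    have cd: "cdom ?R g (\<Union>c\<in>ch ?R g. gdom C c)" using 1(2) l' IH by (rule cdom_gate)
    have gd: "gdom C g = (\<Union>c\<in>ch C g. gdom C c)" using gdom_gate[OF f g False] .
    have "(\<Union>c\<in>ch ?R g. gdom C c) = gdom C g"
    proof (rule glab_cases[of "lab C g"])
      fix a b assume "lab C g = Inp a b" thus ?thesis using False is_inp_def by blast
    next
      assume l: "lab C g = UnionG"
      have eq: "\<forall>c\<in>ch C g. gdom C c = gdom C g" using w g l unfolding well_defined_def by blast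
      obtain c where "c \<in> ch C g" "alive C OK c" using alive_un_child[OF f ag l] by blast
      hence ne: "c \<in> ch ?R g" unfolding rc_simps by blast
      show ?thesis
      proof (intro equalityI subsetI)
        fix x assume "x \<in> (\<Union>c\<in>ch ?R g. gdom C c)"
        thus "x \<in> gdom C g" using eq unfolding rc_simps by blast
      next
        fix x assume "x \<in> gdom C g"
        thus "x \<in> (\<Union>c\<in>ch ?R g. gdom C c)" using eq ne unfolding rc_simps by blast
      qed
    next
      assume l: "lab C g = ProdG"
      have chq: "ch ?R g = ch C g" using alive_prod_child[OF f ag l] unfolding rc_simps by blast
      thus ?thesis using gd by simp
    qed
    thus ?thesis using cd by simp
  qed
qed

lemma rcirc_gdom:
  assumes f: "fcircuit C" and w: "well_defined C" and s: "alive C OK (sink C)"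
    and gR: "g \<in> gates (rcirc C OK)"
  shows "gdom (rcirc C OK) g = gdom C g"
  using rcirc_cdom[OF assms] by (rule gdom_eq)

lemma rcirc_wd:
  assumes f: "fcircuit C" and w: "well_defined C" and s: "alive C OK (sink C)"
  shows "well_defined (rcirc C OK)"
proof -
  let ?R = "rcirc C OK"
  have sub: "gates ?R \<subseteq> gates C" using rgates_sub[OF s] .
  have W: "\<And>g. g \<in> gates C \<Longrightarrow> (lab C g = UnionG \<longrightarrow> (\<forall>c\<in>ch C g. gdom C c = gdom C g)) \<and>
     (lab C g = ProdG \<longrightarrow> (\<forall>c1\<in>ch C g. \<forall>c2\<in>ch C g. c1 \<noteq> c2 \<longrightarrow>
                               gdom C c1 \<inter> gdom C c2 = {}))"
    using w unfolding well_defined_def by blast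
  have "(lab ?R g = UnionG \<longrightarrow> (\<forall>c\<in>ch ?R g. gdom ?R c = gdom ?R g)) \<and>
     (lab ?R g = ProdG \<longrightarrow> (\<forall>c1\<in>ch ?R g. \<forall>c2\<in>ch ?R g. c1 \<noteq> c2 \<longrightarrow>
                               gdom ?R c1 \<inter> gdom ?R c2 = {}))" if gR: "g \<in> gates ?R" for g
  proof -
    have g: "g \<in> gates C" using gR sub by blast
    have cg: "gdom ?R c = gdom C c" if c: "c \<in> ch ?R g" for c
    proof -
      have "c \<in> gates ?R" using rch_gates[OF s gR c f] .
      thus ?thesis using rcirc_gdom[OF f w s] by blast
    qed
    have gg: "gdom ?R g = gdom C g" using rcirc_gdom[OF f w s gR] .
    have chs: "ch ?R g \<subseteq> ch C g" unfolding rc_simps by blast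
    have lb: "lab ?R g = lab C g" by (simp add: rc_simps)
    note Wg = W[OF g]
    show ?thesis
    proof (intro conjI impI ballI)
      fix c assume l: "lab ?R g = UnionG" and c: "c \<in> ch ?R g"
      have "gdom C c = gdom C g" using Wg l c chs lb by auto
      thus "gdom ?R c = gdom ?R g" using cg[OF c] gg by simp
    next
      fix c1 c2 assume l: "lab ?R g = ProdG" and c: "c1 \<in> ch ?R g" "c2 \<in> ch ?R g" and ne: "c1 \<noteq> c2"
      have "gdom C c1 \<inter> gdom C c2 = {}" using Wg l c chs lb ne by auto
      thus "gdom ?R c1 \<inter> gdom ?R c2 = {}" using cg[OF c(1)] cg[OF c(2)] by simp
    qed
  qed
  thus ?thesis unfolding well_defined_def by blast
qed

lemma rcirc_size:
  assumes f: "fcircuit C" and s: "alive C OK (sink C)"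
  shows "csize (rcirc C OK) \<le> csize C"
proof -
  let ?R = "rcirc C OK"
  have sub: "gates ?R \<subseteq> gates C" using rgates_sub[OF s] .
  have fin: "finite (gates C)" using f unfolding fcircuit_def by blast
  have c1: "card (gates ?R) \<le> card (gates C)" using fin sub by (rule card_mono)
  have c2: "card (ch ?R g) \<le> card (ch C g)" if "g \<in> gates ?R" for g
  proof -
    have g: "g \<in> gates C" using that sub by blast
    have "ch C g \<subseteq> gates C" using fc_ch[OF f g] by blast
    hence fc: "finite (ch C g)" using fin by (rule finite_subset)
    have "ch ?R g \<subseteq> ch C g" unfolding rc_simps by blast
    with fc show ?thesis by (rule card_mono)
  qed
  have s1: "(\<Sum>g\<in>gates ?R. card (ch ?R g)) \<le> (\<Sum>g\<in>gates ?R. card (ch C g))"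
    using c2 by (rule sum_mono)
  have s2: "(\<Sum>g\<in>gates ?R. card (ch C g)) \<le> (\<Sum>g\<in>gates C. card (ch C g))"
    using fin sub by (rule sum_mono2) simp
  show ?thesis unfolding csize_def using c1 s1 s2 by linarith
qed

lemma restrict:
  assumes f: "fcircuit C" and w: "well_defined C"
    and ne: "{G \<in> circ_set C. G \<subseteq> OK} \<noteq> {}"
  shows "fcircuit (rcirc C OK) \<and> well_defined (rcirc C OK) \<and>
         circ_set (rcirc C OK) = {G \<in> circ_set C. G \<subseteq> OK} \<and> csize (rcirc C OK) \<le> csize C"
proof -
  have sk: "sink C \<in> gates C" using f fcircuit_def by blast
  have s: "alive C OK (sink C)" using ne sk unfolding alive_def Sf_def circ_set_sem by blast
  have skR: "sink C \<in> gates (rcirc C OK)" unfolding rc_simps by simp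
  have "csem (rcirc C OK) (sink C) (Sf C OK (sink C))"
    using rcirc_csem[OF f s skR] .
  hence "circ_set (rcirc C OK) = Sf C OK (sink C)"
    unfolding circ_set_sem rc_simps by (rule sem_eq)
  hence "circ_set (rcirc C OK) = {G \<in> circ_set C. G \<subseteq> OK}"
    unfolding Sf_def circ_set_sem by simp
  thus ?thesis using rcirc_fcircuit[OF f s] rcirc_wd[OF f w s] rcirc_size[OF f s] by blast
qed


definition pe :: "nat \<Rightarrow> nat \<Rightarrow> nat" where "pe t p = prod_encode (t, p)"

lemma pe_eq[simp]: "pe t p = pe t' p' \<longleftrightarrow> t = t' \<and> p = p'"
  unfolding pe_def by simp

lemma pe_decode[simp]: "prod_decode (pe t p) = (t, p)"
  unfolding pe_def by simp

definition theta :: "'a list \<Rightarrow> (nat \<Rightarrow> 'a \<Rightarrow> 'b) \<Rightarrow> nat \<Rightarrow> 'a \<times> 'b" where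
  "theta xs hv q = (case prod_decode q of (i, j) \<Rightarrow> (xs ! j, hv i (xs ! j)))"

definition mkC :: "'a list \<Rightarrow> (nat \<Rightarrow> 'a \<Rightarrow> 'b) \<Rightarrow> nat \<Rightarrow> ('a, 'b) fcirc" where
  "mkC xs hv n = \<lparr>gates = {pe 0 0} \<union> (\<lambda>i. pe 1 i) ` {..<n} \<union>
                            (\<lambda>(i, j). pe 2 (pe i j)) ` ({..<n} \<times> {..<length xs}),
     ch = (\<lambda>g. case prod_decode g of (t, p) \<Rightarrow>
              if t = 0 then (\<lambda>i. pe 1 i) ` {..<n}
              else if t = 1 then (\<lambda>j. pe 2 (pe p j)) ` {..<length xs} else {}),
     lab = (\<lambda>g. case prod_decode g of (t, p) \<Rightarrow>
              if t = 0 then UnionG else if t = 1 then ProdG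
              else Inp (fst (theta xs hv p)) (snd (theta xs hv p))),
     sink = pe 0 0\<rparr>"

lemma mk_simps:
  "gates (mkC xs hv n) = {pe 0 0} \<union> (\<lambda>i. pe 1 i) ` {..<n} \<union>
                            (\<lambda>(i, j). pe 2 (pe i j)) ` ({..<n} \<times> {..<length xs})"
  "sink (mkC xs hv n) = pe 0 0"
  "ch (mkC xs hv n) (pe 0 p) = (if p = 0 then (\<lambda>i. pe 1 i) ` {..<n} else (\<lambda>i. pe 1 i) ` {..<n})"
  "ch (mkC xs hv n) (pe 1 p) = (\<lambda>j. pe 2 (pe p j)) ` {..<length xs}"
  "ch (mkC xs hv n) (pe (Suc (Suc t)) p) = {}"
  "lab (mkC xs hv n) (pe 0 p) = UnionG"
  "lab (mkC xs hv n) (pe 1 p) = ProdG"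
  "ch (mkC xs hv n) (pe (Suc 0) p) = (\<lambda>j. pe 2 (pe p j)) ` {..<length xs}"
  "lab (mkC xs hv n) (pe (Suc 0) p) = ProdG"
  "lab (mkC xs hv n) (pe (Suc (Suc t)) p) = Inp (fst (theta xs hv p)) (snd (theta xs hv p))"
  unfolding mkC_def pe_def by simp_all

lemma ch_pe2: "ch (mkC xs hv n) (pe 2 p) = {}"
  unfolding mkC_def pe_def by simp

lemma lab_pe2: "lab (mkC xs hv n) (pe 2 p) = Inp (fst (theta xs hv p)) (snd (theta xs hv p))"
  unfolding mkC_def pe_def by simp

lemma theta_pe: "theta xs hv (pe i j) = (xs ! j, hv i (xs ! j))"
  by (simp add: theta_def pe_def)

lemma mk_gates_cases:
  assumes "g \<in> gates (mkC xs hv n)"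
  obtains "g = pe 0 0" | i where "i < n" "g = pe 1 i"
   | i j where "i < n" "j < length xs" "g = pe 2 (pe i j)"
proof -
  have "g = pe 0 0 \<or> g \<in> (\<lambda>i. pe 1 i) ` {..<n} \<or>
        g \<in> (\<lambda>(i, j). pe 2 (pe i j)) ` ({..<n} \<times> {..<length xs})"
    using assms unfolding mk_simps by simp
  thus thesis
  proof (elim disjE)
    assume "g = pe 0 0" thus thesis by (rule that(1))
  next
    assume "g \<in> (\<lambda>i. pe 1 i) ` {..<n}"
    then obtain i where "i \<in> {..<n}" "g = pe 1 i" by (rule imageE) simp
    thus thesis using that(2) by simp
  next
    assume "g \<in> (\<lambda>(i, j). pe 2 (pe i j)) ` ({..<n} \<times> {..<length xs})"
    then obtain p where p: "p \<in> {..<n} \<times> {..<length xs}" "g = (\<lambda>(i, j). pe 2 (pe i j)) p"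
      by (rule imageE) simp
    obtain i j where "p = (i, j)" by (cases p)
    thus thesis using p that(3) by simp
  qed
qed

lemma prod_singletons: "{(\<Union>c\<in>I. f c) | f. \<forall>c\<in>I. f c \<in> {F c}} = {\<Union>c\<in>I. F c}"
proof (intro equalityI subsetI)
  fix x assume "x \<in> {(\<Union>c\<in>I. f c) | f. \<forall>c\<in>I. f c \<in> {F c}}"
  then obtain f where f: "x = (\<Union>c\<in>I. f c)" "\<forall>c\<in>I. f c \<in> {F c}" by blast
  have "(\<Union>c\<in>I. f c) = (\<Union>c\<in>I. F c)" using f(2) by (intro SUP_cong) simp_all
  thus "x \<in> {\<Union>c\<in>I. F c}" using f(1) by simp
next
  fix x assume "x \<in> {\<Union>c\<in>I. F c}"
  hence "x = (\<Union>c\<in>I. F c)" by simp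
  thus "x \<in> {(\<Union>c\<in>I. f c) | f. \<forall>c\<in>I. f c \<in> {F c}}"
    by (intro CollectI exI[of _ F] conjI) simp_all
qed

definition graphof :: "'a list \<Rightarrow> ('a \<Rightarrow> 'b) \<Rightarrow> ('a \<times> 'b) set" where
  "graphof xs h = {(a, h a) | a. a \<in> set xs}"

lemma mk_csem_inp: "i < n \<Longrightarrow> j < length xs \<Longrightarrow>
  csem (mkC xs hv n) (pe 2 (pe i j)) {{(xs ! j, hv i (xs ! j))}}"
proof -
  assume a: "i < n" "j < length xs"
  have "(i, j) \<in> {..<n} \<times> {..<length xs}" using a by simp
  hence g: "pe 2 (pe i j) \<in> gates (mkC xs hv n)" unfolding mk_simps by (intro UnI2 rev_image_eqI) auto
  have l: "lab (mkC xs hv n) (pe 2 (pe i j)) = Inp (xs ! j) (hv i (xs ! j))"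
    unfolding lab_pe2 theta_pe by simp
  show ?thesis using g l by (rule csem_inp)
qed

lemma mk_csem_prod:
  assumes i: "i < n"
  shows "csem (mkC xs hv n) (pe 1 i) {graphof xs (hv i)}"
proof -
  let ?C = "mkC xs hv n"
  define S where "S c = {{theta xs hv (snd (prod_decode c))}}" for c
  have g: "pe 1 i \<in> gates ?C" using i unfolding mk_simps by blast
  have l: "lab ?C (pe 1 i) = ProdG" by (simp add: mk_simps)
  have cs: "csem ?C c (S c)" if c: "c \<in> ch ?C (pe 1 i)" for c
  proof -
    obtain j where j: "j < length xs" "c = pe 2 (pe i j)" using c unfolding mk_simps by blast
    have "S c = {{(xs ! j, hv i (xs ! j))}}" unfolding S_def j(2) by (simp add: theta_pe)
    thus ?thesis using mk_csem_inp[OF i j(1), of hv] j(2) by simp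
  qed
  have "csem ?C (pe 1 i) {(\<Union>c\<in>ch ?C (pe 1 i). f c) | f. \<forall>c\<in>ch ?C (pe 1 i). f c \<in> S c}"
    using g l cs by (rule csem_prod)
  moreover have "{(\<Union>c\<in>ch ?C (pe 1 i). f c) | f. \<forall>c\<in>ch ?C (pe 1 i). f c \<in> S c} = {graphof xs (hv i)}"
  proof -
    have "{(\<Union>c\<in>ch ?C (pe 1 i). f c) | f. \<forall>c\<in>ch ?C (pe 1 i). f c \<in> S c}
        = {(\<Union>c\<in>ch ?C (pe 1 i). {theta xs hv (snd (prod_decode c))})}"
      unfolding S_def by (rule prod_singletons)
    moreover have "(\<Union>c\<in>ch ?C (pe 1 i). {theta xs hv (snd (prod_decode c))}) = graphof xs (hv i)"
    proof (intro equalityI subsetI)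
      fix x assume "x \<in> (\<Union>c\<in>ch ?C (pe 1 i). {theta xs hv (snd (prod_decode c))})"
      then obtain c where c: "c \<in> ch ?C (pe 1 i)" "x = theta xs hv (snd (prod_decode c))" by blast
      obtain j where j: "j < length xs" "c = pe 2 (pe i j)" using c(1) unfolding mk_simps by blast
      have "x = (xs ! j, hv i (xs ! j))" using c(2) j(2) by (simp add: theta_pe)
      moreover have "xs ! j \<in> set xs" using j(1) by simp
      ultimately show "x \<in> graphof xs (hv i)" unfolding graphof_def by blast
    next
      fix x assume "x \<in> graphof xs (hv i)"
      then obtain a where a: "x = (a, hv i a)" "a \<in> set xs" unfolding graphof_def by blast
      obtain j where j: "j < length xs" "a = xs ! j" using a(2) by (metis in_set_conv_nth)
      have c: "pe 2 (pe i j) \<in> ch ?C (pe 1 i)" using j(1) unfolding mk_simps by blast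
      have "x = theta xs hv (snd (prod_decode (pe 2 (pe i j))))" using a(1) j(2) by (simp add: theta_pe)
      thus "x \<in> (\<Union>c\<in>ch ?C (pe 1 i). {theta xs hv (snd (prod_decode c))})" using c by blast
    qed
    ultimately show ?thesis by simp
  qed
  ultimately show ?thesis by simp
qed

lemma mk_circ_set:
  assumes n: "n > 0"
  shows "csem (mkC xs hv n) (pe 0 0) {graphof xs (hv i) | i. i < n}"
proof -
  let ?C = "mkC xs hv n"
  define S where "S c = {graphof xs (hv (snd (prod_decode c)))}" for c
  have g: "pe 0 0 \<in> gates ?C" unfolding mk_simps by blast
  have l: "lab ?C (pe 0 0) = UnionG" by (simp add: mk_simps)
  have cs: "csem ?C c (S c)" if c: "c \<in> ch ?C (pe 0 0)" for c
  proof -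
    obtain i where i: "i < n" "c = pe 1 i" using c unfolding mk_simps by auto
    have "S c = {graphof xs (hv i)}" unfolding S_def i(2) by simp
    thus ?thesis using mk_csem_prod[OF i(1), of xs hv] i(2) by simp
  qed
  have "csem ?C (pe 0 0) (\<Union>c\<in>ch ?C (pe 0 0). S c)" using g l cs by (rule csem_un)
  moreover have "(\<Union>c\<in>ch ?C (pe 0 0). S c) = {graphof xs (hv i) | i. i < n}"
  proof (intro equalityI subsetI)
    fix x assume "x \<in> (\<Union>c\<in>ch ?C (pe 0 0). S c)"
    then obtain c where c: "c \<in> ch ?C (pe 0 0)" "x \<in> S c" by blast
    obtain i where i: "i < n" "c = pe 1 i" using c(1) unfolding mk_simps by auto
    have "x = graphof xs (hv i)" using c(2) i(2) unfolding S_def by simp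
    thus "x \<in> {graphof xs (hv i) | i. i < n}" using i(1) by blast
  next
    fix x assume "x \<in> {graphof xs (hv i) | i. i < n}"
    then obtain i where i: "i < n" "x = graphof xs (hv i)" by blast
    have c: "pe 1 i \<in> ch ?C (pe 0 0)" using i(1) unfolding mk_simps by simp
    have "x \<in> S (pe 1 i)" using i(2) unfolding S_def by simp
    thus "x \<in> (\<Union>c\<in>ch ?C (pe 0 0). S c)" using c by blast
  qed
  ultimately show ?thesis by simp
qed

lemma mk_cdom_inp: "i < n \<Longrightarrow> j < length xs \<Longrightarrow> cdom (mkC xs hv n) (pe 2 (pe i j)) {xs ! j}"
proof -
  assume a: "i < n" "j < length xs"
  have "(i, j) \<in> {..<n} \<times> {..<length xs}" using a by simp
  hence g: "pe 2 (pe i j) \<in> gates (mkC xs hv n)" unfolding mk_simps by (intro UnI2 rev_image_eqI) auto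
  have l: "lab (mkC xs hv n) (pe 2 (pe i j)) = Inp (xs ! j) (hv i (xs ! j))"
    unfolding lab_pe2 theta_pe by simp
  show ?thesis using g l by (rule cdom_inp)
qed

lemma mk_cdom_prod:
  assumes i: "i < n"
  shows "cdom (mkC xs hv n) (pe 1 i) (set xs)"
proof -
  let ?C = "mkC xs hv n"
  define D where "D c = {xs ! (snd (prod_decode (snd (prod_decode c))))}" for c
  have g: "pe 1 i \<in> gates ?C" using i unfolding mk_simps by blast
  have l: "\<not> is_inp (lab ?C (pe 1 i))" by (simp add: mk_simps is_inp_def)
  have cs: "cdom ?C c (D c)" if c: "c \<in> ch ?C (pe 1 i)" for c
  proof -
    obtain j where j: "j < length xs" "c = pe 2 (pe i j)" using c unfolding mk_simps by blast
    have "D c = {xs ! j}" unfolding D_def j(2) by simp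
    thus ?thesis using mk_cdom_inp[OF i j(1), where hv=hv] j(2) by simp
  qed
  have "cdom ?C (pe 1 i) (\<Union>c\<in>ch ?C (pe 1 i). D c)" using g l cs by (rule cdom_gate)
  moreover have "(\<Union>c\<in>ch ?C (pe 1 i). D c) = set xs"
  proof (intro equalityI subsetI)
    fix x assume "x \<in> (\<Union>c\<in>ch ?C (pe 1 i). D c)"
    then obtain c where c: "c \<in> ch ?C (pe 1 i)" "x \<in> D c" by blast
    obtain j where j: "j < length xs" "c = pe 2 (pe i j)" using c(1) unfolding mk_simps by blast
    have "x = xs ! j" using c(2) j(2) unfolding D_def by simp
    thus "x \<in> set xs" using j(1) by simp
  next
    fix x assume "x \<in> set xs"
    then obtain j where j: "j < length xs" "x = xs ! j" by (metis in_set_conv_nth)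
    have c: "pe 2 (pe i j) \<in> ch ?C (pe 1 i)" using j(1) unfolding mk_simps by blast
    have "x \<in> D (pe 2 (pe i j))" using j(2) unfolding D_def by simp
    thus "x \<in> (\<Union>c\<in>ch ?C (pe 1 i). D c)" using c by blast
  qed
  ultimately show ?thesis by simp
qed

lemma mk_cdom_sink:
  assumes n: "n > 0"
  shows "cdom (mkC xs hv n) (pe 0 0) (set xs)"
proof -
  let ?C = "mkC xs hv n"
  have g: "pe 0 0 \<in> gates ?C" unfolding mk_simps by blast
  have l: "\<not> is_inp (lab ?C (pe 0 0))" by (simp add: mk_simps is_inp_def)
  have cs: "cdom ?C c ((\<lambda>_. set xs) c)" if c: "c \<in> ch ?C (pe 0 0)" for c
  proof -
    obtain i where i: "i < n" "c = pe 1 i" using c unfolding mk_simps by auto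
    thus ?thesis using mk_cdom_prod[OF i(1), of xs hv] by simp
  qed
  have "cdom ?C (pe 0 0) (\<Union>c\<in>ch ?C (pe 0 0). (\<lambda>_. set xs) c)" using g l cs by (rule cdom_gate)
  moreover have "(\<Union>c\<in>ch ?C (pe 0 0). (\<lambda>_. set xs) c) = set xs"
    unfolding mk_simps using n by auto
  ultimately show ?thesis by simp
qed

definition rank :: "nat \<Rightarrow> nat" where
  "rank g = (case prod_decode g of (t, p) \<Rightarrow> if t = 0 then 2 else if t = 1 then 1 else 0)"

lemma rank_pe: "rank (pe 0 p) = 2" "rank (pe 1 p) = 1" "rank (pe 2 p) = 0" "rank (pe (Suc 0) p) = 1"
  unfolding rank_def by simp_all

lemma mk_fcircuit:
  assumes n: "n > 0" and k: "xs \<noteq> []"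
  shows "fcircuit (mkC xs hv n)"
proof -
  let ?C = "mkC xs hv n"
  have fin: "finite (gates ?C)" unfolding mk_simps by simp
  have sk: "sink ?C \<in> gates ?C" unfolding mk_simps by blast
  have chs: "ch ?C g \<subseteq> gates ?C" if g: "g \<in> gates ?C" for g
    using g
  proof (cases rule: mk_gates_cases)
    case 1 thus ?thesis by (auto simp: mk_simps)
  next
    case (2 i)
    have "(\<lambda>j. pe 2 (pe i j)) ` {..<length xs} \<subseteq> gates ?C"
    proof
      fix x assume "x \<in> (\<lambda>j. pe 2 (pe i j)) ` {..<length xs}"
      then obtain j where j: "j < length xs" "x = pe 2 (pe i j)" by auto
      have "(i, j) \<in> {..<n} \<times> {..<length xs}" using j 2 by simp
      thus "x \<in> gates ?C" unfolding mk_simps j(2) by (intro UnI2 rev_image_eqI) auto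
    qed
    thus ?thesis using 2 by (simp add: mk_simps)
  next
    case (3 i j) thus ?thesis by (simp add: ch_pe2)
  qed
  have inp: "ch ?C g = {} \<longleftrightarrow> is_inp (lab ?C g)" if g: "g \<in> gates ?C" for g
    using g
  proof (cases rule: mk_gates_cases)
    case 1 thus ?thesis using n by (auto simp: mk_simps is_inp_def)
  next
    case (2 i) thus ?thesis using k by (auto simp: mk_simps is_inp_def)
  next
    case (3 i j) thus ?thesis by (simp add: ch_pe2 lab_pe2 is_inp_def)
  qed
  have rk: "rank c < rank g" if g: "g \<in> gates ?C" and c: "c \<in> ch ?C g" for c g
    using g
  proof (cases rule: mk_gates_cases)
    case 1 thus ?thesis using c by (auto simp: mk_simps rank_pe)
  next
    case (2 i) thus ?thesis using c by (auto simp: mk_simps rank_pe)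
  next
    case (3 i j) thus ?thesis using c by (simp add: ch_pe2)
  qed
  have acyc: "acyclic {(c, g). g \<in> gates ?C \<and> c \<in> ch ?C g}"
  proof (rule acyclic_subset)
    show "acyclic (inv_image less_than rank)" by (rule wf_acyclic) simp
    show "{(c, g). g \<in> gates ?C \<and> c \<in> ch ?C g} \<subseteq> inv_image less_than rank"
      using rk by auto
  qed
  have nsk: "sink ?C \<notin> ch ?C g" if g: "g \<in> gates ?C" for g
    using g
  proof (cases rule: mk_gates_cases)
    case 1 thus ?thesis by (auto simp: mk_simps)
  next
    case (2 i) thus ?thesis by (auto simp: mk_simps)
  next
    case (3 i j) thus ?thesis by (simp add: ch_pe2)
  qed
  have par: "\<exists>g'\<in>gates ?C. g \<in> ch ?C g'" if g: "g \<in> gates ?C" and ns: "g \<noteq> sink ?C" for g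
    using g
  proof (cases rule: mk_gates_cases)
    case 1 thus ?thesis using ns by (simp add: mk_simps)
  next
    case (2 i)
    have "pe 0 0 \<in> gates ?C" unfolding mk_simps by blast
    moreover have "g \<in> ch ?C (pe 0 0)" using 2 by (simp add: mk_simps)
    ultimately show ?thesis by blast
  next
    case (3 i j)
    have "pe 1 i \<in> gates ?C" using 3 unfolding mk_simps by blast
    moreover have "g \<in> ch ?C (pe 1 i)" using 3 by (simp add: mk_simps)
    ultimately show ?thesis by blast
  qed
  show ?thesis unfolding fcircuit_def using fin sk chs inp acyc nsk par by blast
qed

lemma mk_wd:
  assumes n: "n > 0" and k: "xs \<noteq> []" and d: "distinct xs"
  shows "well_defined (mkC xs hv n)"
proof -
  let ?C = "mkC xs hv n"
  have f: "fcircuit ?C" using mk_fcircuit[OF n k] .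
  have gd0: "gdom ?C (pe 0 0) = set xs" using mk_cdom_sink[OF n] by (rule gdom_eq)
  have gd1: "gdom ?C (pe 1 i) = set xs" if "i < n" for i using mk_cdom_prod[OF that] by (rule gdom_eq)
  have gd2: "gdom ?C (pe 2 (pe i j)) = {xs ! j}" if "i < n" "j < length xs" for i j
    using mk_cdom_inp[OF that] by (rule gdom_eq)
  have "(lab ?C g = UnionG \<longrightarrow> (\<forall>c\<in>ch ?C g. gdom ?C c = gdom ?C g)) \<and>
     (lab ?C g = ProdG \<longrightarrow> (\<forall>c1\<in>ch ?C g. \<forall>c2\<in>ch ?C g. c1 \<noteq> c2 \<longrightarrow>
                               gdom ?C c1 \<inter> gdom ?C c2 = {}))" if g: "g \<in> gates ?C" for g
    using g
  proof (cases rule: mk_gates_cases)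
    case 1
    have "\<forall>c\<in>ch ?C g. gdom ?C c = gdom ?C g" using 1 gd0 gd1 by (auto simp: mk_simps)
    thus ?thesis using 1 by (simp add: mk_simps)
  next
    case (2 i)
    have "\<forall>c1\<in>ch ?C g. \<forall>c2\<in>ch ?C g. c1 \<noteq> c2 \<longrightarrow> gdom ?C c1 \<inter> gdom ?C c2 = {}"
    proof (intro ballI impI)
      fix c1 c2 assume c: "c1 \<in> ch ?C g" "c2 \<in> ch ?C g" "c1 \<noteq> c2"
      obtain j1 where j1: "j1 < length xs" "c1 = pe 2 (pe i j1)" using c(1) 2 by (auto simp: mk_simps)
      obtain j2 where j2: "j2 < length xs" "c2 = pe 2 (pe i j2)" using c(2) 2 by (auto simp: mk_simps)
      have "j1 \<noteq> j2" using c(3) j1 j2 by auto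
      hence "xs ! j1 \<noteq> xs ! j2" using d j1 j2 by (simp add: nth_eq_iff_index_eq)
      thus "gdom ?C c1 \<inter> gdom ?C c2 = {}" using gd2[OF 2(1) j1(1)] gd2[OF 2(1) j2(1)] j1 j2 by simp
    qed
    thus ?thesis using 2 by (simp add: mk_simps)
  next
    case (3 i j) thus ?thesis by (simp add: lab_pe2)
  qed
  thus ?thesis unfolding well_defined_def by blast
qed

lemma mk_size:
  "csize (mkC xs hv n) \<le> (1 + n + n * length xs) * (1 + n + length xs)"
proof -
  let ?C = "mkC xs hv n" and ?k = "length xs"
  have cg: "card (gates ?C) \<le> 1 + n + n * ?k"
  proof -
    have "card (gates ?C) \<le> card {pe 0 0} + card ((\<lambda>i. pe 1 i) ` {..<n}) +
        card ((\<lambda>(i, j). pe 2 (pe i j)) ` ({..<n} \<times> {..<?k}))"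
      unfolding mk_simps by (meson card_Un_le le_trans add_le_mono order_refl)
    also have "\<dots> \<le> 1 + n + n * ?k"
      using card_image_le[of "{..<n}" "\<lambda>i. pe 1 i"]
        card_image_le[of "{..<n} \<times> {..<?k}" "\<lambda>(i, j). pe 2 (pe i j)"]
      by (simp add: card_cartesian_product)
    finally show ?thesis .
  qed
  have cc: "card (ch ?C g) \<le> n + ?k" if "g \<in> gates ?C" for g
    using that
  proof (cases rule: mk_gates_cases)
    case 1 thus ?thesis using card_image_le[of "{..<n}" "\<lambda>i. pe 1 i"] by (simp add: mk_simps)
  next
    case (2 i) thus ?thesis using card_image_le[of "{..<?k}" "\<lambda>j. pe 2 (pe i j)"] by (simp add: mk_simps)
  next
    case (3 i j) thus ?thesis by (simp add: ch_pe2)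
  qed
  have "(\<Sum>g\<in>gates ?C. card (ch ?C g)) \<le> card (gates ?C) * (n + ?k)"
    using sum_bounded_above[of "gates ?C" "\<lambda>g. card (ch ?C g)" "n + ?k"] cc by simp
  hence "csize ?C \<le> card (gates ?C) * (1 + n + ?k)" unfolding csize_def by (simp add: algebra_simps)
  also have "\<dots> \<le> (1 + n + n * ?k) * (1 + n + ?k)" using cg by (rule mult_right_mono) simp
  finally show ?thesis .
qed

lemma exists_circuit:
  assumes X: "finite X" "X \<noteq> {}" and H: "finite H" "H \<noteq> {}"
    and G: "\<forall>G\<in>H. \<exists>h. G = {(a, h a) | a. a \<in> X}"
  shows "\<exists>C :: ('a, 'b) fcirc. fcircuit C \<and> well_defined C \<and> circ_set C = H \<and>
           csize C \<le> (1 + card H + card H * card X) * (1 + card H + card X)"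
proof -
  obtain xs where xs: "set xs = X" "distinct xs" using finite_distinct_list[OF X(1)] by blast
  obtain hs where hs: "set hs = H" "distinct hs" using finite_distinct_list[OF H(1)] by blast
  define n where "n = length hs"
  define hv where "hv i = (SOME h. hs ! i = {(a, h a) | a. a \<in> X})" for i
  have hvi: "hs ! i = graphof xs (hv i)" if "i < n" for i
  proof -
    have "hs ! i \<in> H" using that hs n_def by auto
    hence "\<exists>h. hs ! i = {(a, h a) | a. a \<in> X}" using G by blast
    hence "hs ! i = {(a, hv i a) | a. a \<in> X}" unfolding hv_def by (rule someI_ex)
    thus ?thesis unfolding graphof_def xs(1) .
  qed
  have cardH: "card H = n" using hs distinct_card n_def by metis
  have cardX: "card X = length xs" using xs distinct_card by metis
  have n: "n > 0" using H hs n_def by auto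
  have k: "xs \<noteq> []" using X xs by auto
  let ?C = "mkC xs hv n"
  have "{graphof xs (hv i) | i. i < n} = H"
  proof -
    have "{graphof xs (hv i) | i. i < n} = {hs ! i | i. i < n}" using hvi by metis
    also have "\<dots> = set hs" unfolding n_def by (auto simp: in_set_conv_nth)
    finally show ?thesis using hs by simp
  qed
  hence cs: "circ_set ?C = H" using mk_circ_set[OF n, of xs hv] unfolding circ_set_sem mk_simps
    by (metis sem_eq)
  show ?thesis using mk_fcircuit[OF n k] mk_wd[OF n k xs(2)] cs mk_size[of xs hv n] cardH cardX
    by metis
qed


lemma univ_bound:
  assumes fS: "finite Sig" and s: "is_struct Sig ar D" and c: "connected_struct D"
  shows "card (univ D) \<le> 1 + ssize Sig D * (\<Sum>R\<in>Sig. ar R)"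
proof (cases "card (univ D) \<le> 1")
  case True thus ?thesis by simp
next
  case False
  let ?M = "\<Sum>R\<in>Sig. ar R"
  have finU: "finite (univ D)" using s unfolding is_struct_def by blast
  have relsub: "rel D R \<subseteq> {t. set t \<subseteq> univ D \<and> length t = ar R}" for R
    using s unfolding is_struct_def by blast
  have relfin: "finite (rel D R)" for R
    using finite_subset[OF relsub finite_lists_length_eq[OF finU]] .
  have relempty: "R \<notin> Sig \<Longrightarrow> rel D R = {}" for R using s unfolding is_struct_def by blast
  have sub: "univ D \<subseteq> (\<Union>R\<in>Sig. \<Union>t\<in>rel D R. set t)"
  proof
    fix x assume x: "x \<in> univ D"
    have "\<exists>y\<in>univ D. y \<noteq> x"
    proof (rule ccontr)
      assume "\<not> (\<exists>y\<in>univ D. y \<noteq> x)"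
      hence "univ D \<subseteq> {x}" by blast
      hence "card (univ D) \<le> card {x}" by (rule card_mono[rotated]) simp
      thus False using False by simp
    qed
    then obtain y where y: "y \<in> univ D" "y \<noteq> x" by blast
    have "(x, y) \<in> (gaifman D)\<^sup>*" using c x y(1) unfolding connected_struct_def by blast
    then obtain z where "(x, z) \<in> gaifman D"
      by (cases rule: converse_rtranclE) (use y(2) in auto)
    then obtain R t where t: "t \<in> rel D R" "x \<in> set t" unfolding gaifman_def by blast
    have "R \<in> Sig" using t(1) relempty by blast
    thus "x \<in> (\<Union>R\<in>Sig. \<Union>t\<in>rel D R. set t)" using t by blast
  qed
  have finUN: "finite (\<Union>R\<in>Sig. \<Union>t\<in>rel D R. set t)" using fS relfin by simp
  have "card (univ D) \<le> card (\<Union>R\<in>Sig. \<Union>t\<in>rel D R. set t)" using finUN sub by (rule card_mono)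
  also have "\<dots> \<le> (\<Sum>R\<in>Sig. card (\<Union>t\<in>rel D R. set t))" using fS by (rule card_UN_le)
  also have "\<dots> \<le> (\<Sum>R\<in>Sig. \<Sum>t\<in>rel D R. card (set t))"
    using relfin by (intro sum_mono card_UN_le)
  also have "\<dots> \<le> (\<Sum>R\<in>Sig. card (rel D R) * ?M)"
  proof (rule sum_mono)
    fix R assume R: "R \<in> Sig"
    have "card (set t) \<le> ?M" if "t \<in> rel D R" for t
    proof -
      have "card (set t) \<le> length t" by (rule card_length)
      also have "\<dots> = ar R" using that relsub by blast
      also have "\<dots> \<le> ?M" by (rule member_le_sum[OF R]) (simp_all add: fS)
      finally show ?thesis .
    qed
    thus "(\<Sum>t\<in>rel D R. card (set t)) \<le> card (rel D R) * ?M"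
      using sum_bounded_above[of "rel D R" "\<lambda>t. card (set t)" ?M] by simp
  qed
  also have "\<dots> = ssize Sig D * ?M" unfolding ssize_def by (simp add: sum_distrib_right)
  finally show ?thesis by simp
qed

definition red :: "(nat, 'r + 'a) struct \<Rightarrow> (nat, 'r) struct" where
  "red C = \<lparr>univ = univ C, rel = (\<lambda>R. rel C (Inl R))\<rparr>"

lemma red_simps: "univ (red C) = univ C" "rel (red C) R = rel C (Inl R)"
  unfolding red_def by simp_all

lemma red_all:
  assumes C: "C \<in> part_class Sig ar A"
  shows "red C \<in> all_structs Sig ar"
proof -
  have sC: "is_struct (sig_id Sig A) (ar_id ar) C" and cC: "connected_struct C"
    using C unfolding part_class_def by blast+
  have fin: "finite (univ C)" using sC unfolding is_struct_def by blast
  have rs: "rel C S \<subseteq> {t. length t = ar_id ar S \<and> set t \<subseteq> univ C}" for S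
    using sC unfolding is_struct_def by blast
  have re: "S \<notin> sig_id Sig A \<Longrightarrow> rel C S = {}" for S
    using sC unfolding is_struct_def by blast
  have "is_struct Sig ar (red C)"
    unfolding is_struct_def red_simps
  proof (intro conjI allI)
    show "finite (univ C)" by (rule fin)
    fix R
    show "rel C (Inl R) \<subseteq> {t. length t = ar R \<and> set t \<subseteq> univ C}"
      using rs[of "Inl R"] by (simp add: ar_id_def)
    show "R \<notin> Sig \<longrightarrow> rel C (Inl R) = {}"
      using re[of "Inl R"] by (auto simp: sig_id_def)
  qed
  moreover have "connected_struct (red C)"
  proof -
    have gs: "gaifman C \<subseteq> gaifman (red C) \<union> Id"
    proof
      fix p assume "p \<in> gaifman C"
      then obtain x y S t where p: "p = (x, y)" "t \<in> rel C S" "x \<in> set t" "y \<in> set t"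
        unfolding gaifman_def by blast
      show "p \<in> gaifman (red C) \<union> Id"
      proof (cases S)
        case (Inl R)
        hence "t \<in> rel (red C) R" using p(2) by (simp add: red_simps)
        thus ?thesis using p unfolding gaifman_def by blast
      next
        case (Inr a)
        hence "length t = 1" using rs[of S] p(2) by (auto simp: ar_id_def)
        then obtain z where "t = [z]" by (cases t) auto
        thus ?thesis using p by simp
      qed
    qed
    have "(gaifman C)\<^sup>* \<subseteq> (gaifman (red C) \<union> Id)\<^sup>*" using gs by (rule rtrancl_mono)
    also have "\<dots> = (gaifman (red C))\<^sup>*" by simp
    finally show ?thesis using cC unfolding connected_struct_def red_simps by blast
  qed
  ultimately show ?thesis unfolding all_structs_def by blast
qed

lemma red_size:
  assumes fS: "finite Sig" and fA: "finite A"
  shows "ssize Sig (red C) \<le> ssize (sig_id Sig A) C"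
proof -
  have "ssize Sig (red C) = (\<Sum>R\<in>Sig. card (rel C (Inl R)))" unfolding ssize_def red_simps ..
  also have "\<dots> = (\<Sum>S\<in>Inl ` Sig. card (rel C S))" by (simp add: sum.reindex)
  also have "\<dots> \<le> (\<Sum>S\<in>sig_id Sig A. card (rel C S))"
    by (rule sum_mono2) (use fS fA in \<open>auto simp: sig_id_def\<close>)
  finally show ?thesis unfolding ssize_def .
qed

definition OKset :: "(nat, 'r + 'a) struct \<Rightarrow> ('a \<times> nat) set" where
  "OKset C = {(a, c). c \<in> Pset C a}"

lemma univ_indiv[simp]: "univ (indiv A) = univ A"
  by (simp add: indiv_def)

lemma is_hom_indiv:
  "is_hom (indiv A) C h \<longleftrightarrow> is_hom A (red C) h \<and> (\<forall>a\<in>univ A. h a \<in> Pset C a)"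
proof
  assume H: "is_hom (indiv A) C h"
  have u: "h ` univ A \<subseteq> univ C" using H unfolding is_hom_def univ_indiv by blast
  have r: "\<forall>S. \<forall>t\<in>rel (indiv A) S. map h t \<in> rel C S" using H unfolding is_hom_def by blast
  have "map h t \<in> rel (red C) R" if "t \<in> rel A R" for R t
  proof -
    have "t \<in> rel (indiv A) (Inl R)" using that by (simp add: indiv_def)
    hence "map h t \<in> rel C (Inl R)" using r by blast
    thus ?thesis by (simp add: red_simps)
  qed
  hence "is_hom A (red C) h" using u unfolding is_hom_def red_simps by blast
  moreover have "h a \<in> Pset C a" if "a \<in> univ A" for a
  proof -
    have "[a] \<in> rel (indiv A) (Inr a)" using that by (simp add: indiv_def)
    hence "map h [a] \<in> rel C (Inr a)" using r by blast
    thus ?thesis by (simp add: Pset_def)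
  qed
  ultimately show "is_hom A (red C) h \<and> (\<forall>a\<in>univ A. h a \<in> Pset C a)" by blast
next
  assume H: "is_hom A (red C) h \<and> (\<forall>a\<in>univ A. h a \<in> Pset C a)"
  have u: "h ` univ A \<subseteq> univ C" using H unfolding is_hom_def red_simps by blast
  have "map h t \<in> rel C S" if t: "t \<in> rel (indiv A) S" for S t
  proof (cases S)
    case (Inl R)
    hence "t \<in> rel A R" using t by (simp add: indiv_def)
    thus ?thesis using H Inl unfolding is_hom_def red_simps by blast
  next
    case (Inr a)
    hence "a \<in> univ A" "t = [a]" using t by (auto simp: indiv_def split: if_splits)
    thus ?thesis using H Inr unfolding Pset_def by simp
  qed
  hence r2: "\<forall>S. \<forall>t\<in>rel (indiv A) S. map h t \<in> rel C S" by blast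
  show "is_hom (indiv A) C h" unfolding is_hom_def univ_indiv using u r2 by blast
qed

lemma Hom_mem: "G \<in> Hom A B \<longleftrightarrow> (\<exists>h. G = {(a, h a) | a. a \<in> univ A} \<and> is_hom A B h)"
  unfolding Hom_def by (simp only: mem_Collect_eq)

lemma graph_sub_OK: "{(a, h a) | a. a \<in> univ A} \<subseteq> OKset C \<longleftrightarrow> (\<forall>a\<in>univ A. h a \<in> Pset C a)"
proof
  assume "{(a, h a) | a. a \<in> univ A} \<subseteq> OKset C"
  thus "\<forall>a\<in>univ A. h a \<in> Pset C a" unfolding OKset_def by blast
next
  assume a: "\<forall>a\<in>univ A. h a \<in> Pset C a"
  show "{(a, h a) | a. a \<in> univ A} \<subseteq> OKset C"
  proof
    fix x assume "x \<in> {(a, h a) | a. a \<in> univ A}"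
    then obtain a where "x = (a, h a)" "a \<in> univ A" by blast
    thus "x \<in> OKset C" using a unfolding OKset_def by simp
  qed
qed

lemma Hom_indiv: "Hom (indiv A) C = {G \<in> Hom A (red C). G \<subseteq> OKset C}"
proof (intro equalityI subsetI)
  fix G assume "G \<in> Hom (indiv A) C"
  hence "\<exists>h. G = {(a, h a) | a. a \<in> univ A} \<and> is_hom (indiv A) C h"
    unfolding Hom_mem univ_indiv .
  then obtain h where G: "G = {(a, h a) | a. a \<in> univ A}" "is_hom (indiv A) C h" by blast
  have H0: "is_hom A (red C) h \<and> (\<forall>a\<in>univ A. h a \<in> Pset C a)"
    using is_hom_indiv[THEN iffD1, OF G(2)] .
  have H: "is_hom A (red C) h" "\<forall>a\<in>univ A. h a \<in> Pset C a" using H0 by (rule conjunct1, rule conjunct2)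
  have "G \<in> Hom A (red C)" unfolding Hom_mem using G(1) H(1) by blast
  moreover have "G \<subseteq> OKset C" unfolding G(1) graph_sub_OK using H(2) .
  ultimately show "G \<in> {G \<in> Hom A (red C). G \<subseteq> OKset C}" by blast
next
  fix G assume "G \<in> {G \<in> Hom A (red C). G \<subseteq> OKset C}"
  hence G1: "G \<in> Hom A (red C)" and G2: "G \<subseteq> OKset C" by blast+
  from G1 have "\<exists>h. G = {(a, h a) | a. a \<in> univ A} \<and> is_hom A (red C) h" unfolding Hom_mem .
  then obtain h where G: "G = {(a, h a) | a. a \<in> univ A}" "is_hom A (red C) h" by blast
  have "\<forall>a\<in>univ A. h a \<in> Pset C a" using G2 unfolding G(1) graph_sub_OK .
  hence "is_hom (indiv A) C h" using G(2) by (intro is_hom_indiv[THEN iffD2] conjI)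
  thus "G \<in> Hom (indiv A) C" unfolding Hom_mem univ_indiv using G(1) by blast
qed

lemma drep_nonempty: "drep C A B \<Longrightarrow> Hom A B \<noteq> {}"
proof -
  assume d: "drep C A B"
  have f: "fcircuit C" and e: "circ_set C = Hom A B" using d unfolding drep_def by blast+
  have "sink C \<in> gates C" using f unfolding fcircuit_def by blast
  hence "sem C (sink C) \<noteq> {}" using sem_nonempty[OF f] by blast
  thus ?thesis using e unfolding circ_set_sem by simp
qed

lemma Hom_finite:
  assumes "finite (univ A)" "finite (univ B)"
  shows "finite (Hom A B)" "card (Hom A B) \<le> 2 ^ (card (univ A) * card (univ B))"
proof -
  have sub: "Hom A B \<subseteq> Pow (univ A \<times> univ B)" unfolding Hom_def is_hom_def by blast
  have fp: "finite (Pow (univ A \<times> univ B))" using assms by simp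
  show "finite (Hom A B)" using finite_subset[OF sub fp] .
  have "card (Hom A B) \<le> card (Pow (univ A \<times> univ B))" using fp sub by (rule card_mono)
  thus "card (Hom A B) \<le> 2 ^ (card (univ A) * card (univ B))"
    using assms by (simp add: card_Pow card_cartesian_product)
qed

lemma drep_exists:
  assumes fA: "finite (univ A)" "univ A \<noteq> {}" and fB: "finite (univ B)" and ne: "Hom A B \<noteq> {}"
  shows "\<exists>C :: ('a, 'b) fcirc. drep C A B \<and>
     csize C \<le> (1 + card (Hom A B) + card (Hom A B) * card (univ A)) * (1 + card (Hom A B) + card (univ A))"
proof -
  have "\<forall>G\<in>Hom A B. \<exists>h. G = {(a, h a) | a. a \<in> univ A}" unfolding Hom_def by blast
  thus ?thesis using exists_circuit[OF fA Hom_finite(1)[OF fA(1) fB] ne] unfolding drep_def by blast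
qed

lemma dsize_le_csize: "drep C A B \<Longrightarrow> dsize A B \<le> csize C"
proof -
  assume d: "drep C A B"
  hence "\<exists>C. drep C A B" by blast
  hence "dsize A B = (LEAST n. \<exists>C :: ('a, 'b) fcirc. drep C A B \<and> csize C = n)"
    unfolding dsize_def by simp
  also have "\<dots> \<le> csize C" by (rule Least_le) (use d in blast)
  finally show ?thesis .
qed

lemma dsize_attained: "\<exists>C :: ('a, 'b) fcirc. drep C A B \<Longrightarrow>
   \<exists>C :: ('a, 'b) fcirc. drep C A B \<and> csize C = dsize A B"
proof -
  assume e: "\<exists>C :: ('a, 'b) fcirc. drep C A B"
  hence "\<exists>n C. drep (C :: ('a, 'b) fcirc) A B \<and> csize C = n" by blast
  hence "\<exists>C :: ('a, 'b) fcirc. drep C A B \<and> csize C = (LEAST n. \<exists>C :: ('a, 'b) fcirc. drep C A B \<and> csize C = n)"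
    by (rule LeastI_ex)
  thus ?thesis unfolding dsize_def using e by simp
qed

lemma dsize_indiv_le:
  fixes A :: "('a, 'r) struct" and C :: "(nat, 'r + 'a) struct"
  assumes fA: "finite (univ A)" "univ A \<noteq> {}" and fC: "finite (univ C)"
  shows "dsize (indiv A) C \<le> dsize A (red C)"
proof (cases "\<exists>C1 :: ('a, nat) fcirc. drep C1 (indiv A) C")
  case False thus ?thesis unfolding dsize_def by simp
next
  case True
  then obtain C1 :: "('a, nat) fcirc" where C1: "drep C1 (indiv A) C" by blast
  have ne: "Hom (indiv A) C \<noteq> {}" using drep_nonempty[OF C1] .
  hence neR: "Hom A (red C) \<noteq> {}" using Hom_indiv by blast
  have fR: "finite (univ (red C))" using fC by (simp add: red_simps)
  obtain C0 :: "('a, nat) fcirc" where "drep C0 A (red C)" using drep_exists[OF fA fR neR] by blast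
  then obtain C2 :: "('a, nat) fcirc" where C2: "drep C2 A (red C)" "csize C2 = dsize A (red C)"
    using dsize_attained by blast
  have f2: "fcircuit C2" "well_defined C2" "circ_set C2 = Hom A (red C)" using C2(1) unfolding drep_def by blast+
  have eqH: "{G \<in> circ_set C2. G \<subseteq> OKset C} = Hom (indiv A) C" by (simp add: f2(3) Hom_indiv)
  have ne2: "{G \<in> circ_set C2. G \<subseteq> OKset C} \<noteq> {}" using ne eqH by simp
  have R: "fcircuit (rcirc C2 (OKset C)) \<and> well_defined (rcirc C2 (OKset C)) \<and>
         circ_set (rcirc C2 (OKset C)) = {G \<in> circ_set C2. G \<subseteq> OKset C} \<and>
         csize (rcirc C2 (OKset C)) \<le> csize C2" using restrict[OF f2(1,2) ne2] .
  have "drep (rcirc C2 (OKset C)) (indiv A) C" unfolding drep_def using R eqH by simp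
  hence "dsize (indiv A) C \<le> csize (rcirc C2 (OKset C))" by (rule dsize_le_csize)
  thus ?thesis using R C2(2) by linarith
qed

lemma dsize_bound:
  fixes A :: "('a, 'r) struct" and D :: "(nat, 'r) struct"
  assumes fS: "finite Sig" and fA: "finite (univ A)" "univ A \<noteq> {}"
    and D: "D \<in> all_structs Sig ar" and m: "ssize Sig D \<le> m"
  defines "N \<equiv> 2 ^ (card (univ A) * (1 + m * (\<Sum>R\<in>Sig. ar R))) :: nat"
  shows "dsize A D \<le> (1 + N + N * card (univ A)) * (1 + N + card (univ A))"
proof (cases "\<exists>C1 :: ('a, nat) fcirc. drep C1 A D")
  case False thus ?thesis unfolding dsize_def by simp
next
  case True
  then obtain C1 :: "('a, nat) fcirc" where C1: "drep C1 A D" by blast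
  have ne: "Hom A D \<noteq> {}" using drep_nonempty[OF C1] .
  have sD: "is_struct Sig ar D" and cD: "connected_struct D" using D unfolding all_structs_def by blast+
  have fD: "finite (univ D)" using sD unfolding is_struct_def by blast
  have cu: "card (univ D) \<le> 1 + m * (\<Sum>R\<in>Sig. ar R)"
    using univ_bound[OF fS sD cD] mult_right_mono[OF m, of "\<Sum>R\<in>Sig. ar R"] by linarith
  have "card (Hom A D) \<le> 2 ^ (card (univ A) * card (univ D))" using Hom_finite(2)[OF fA(1) fD] .
  also have "\<dots> \<le> N"
  proof -
    have "card (univ A) * card (univ D) \<le> card (univ A) * (1 + m * (\<Sum>R\<in>Sig. ar R))"
      using cu by (rule mult_le_mono2)
    thus ?thesis unfolding N_def by (rule power_increasing) simp
  qed
  finally have hN: "card (Hom A D) \<le> N" .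
  obtain C :: "('a, nat) fcirc" where C: "drep C A D"
    "csize C \<le> (1 + card (Hom A D) + card (Hom A D) * card (univ A)) * (1 + card (Hom A D) + card (univ A))"
    using drep_exists[OF fA fD ne] by blast
  have "dsize A D \<le> csize C" using C(1) by (rule dsize_le_csize)
  also have "\<dots> \<le> (1 + N + N * card (univ A)) * (1 + N + card (univ A))"
  proof -
    have "(1 + card (Hom A D) + card (Hom A D) * card (univ A)) * (1 + card (Hom A D) + card (univ A))
       \<le> (1 + N + N * card (univ A)) * (1 + N + card (univ A))"
      using hN by (intro mult_le_mono add_le_mono) simp_all
    thus ?thesis using C(2) by linarith
  qed
  finally show ?thesis .
qed

theorem lemma6p3:
  fixes Sig :: "'r set" and ar :: "'r \<Rightarrow> nat" and \<A> :: "('a, 'r) struct"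
  assumes "finite Sig"
    and "is_struct Sig ar \<A>"
    and "connected_struct \<A>"
  shows "(\<lambda>m. real (dclass Sig \<A> (all_structs Sig ar) m))
           \<in> \<Omega>(\<lambda>m. real (dclass (sig_id Sig (univ \<A>)) (indiv \<A>)
                                 (part_class Sig ar (univ \<A>)) m))"
proof -
  have fS: "finite Sig" by fact
  have fA: "finite (univ \<A>)" using assms(2) unfolding is_struct_def by blast
  have nA: "univ \<A> \<noteq> {}" using assms(3) unfolding connected_struct_def by blast
  have le: "dclass (sig_id Sig (univ \<A>)) (indiv \<A>) (part_class Sig ar (univ \<A>)) m
            \<le> dclass Sig \<A> (all_structs Sig ar) m" for m
  proof -
    let ?Xp = "{dsize (indiv \<A>) C | C. C \<in> part_class Sig ar (univ \<A>) \<and> ssize (sig_id Sig (univ \<A>)) C \<le> m}"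
    let ?Xa = "{dsize \<A> C | C. C \<in> all_structs Sig ar \<and> ssize Sig C \<le> m}"
    define N where "N = (2 ^ (card (univ \<A>) * (1 + m * (\<Sum>R\<in>Sig. ar R))) :: nat)"
    have bdd: "bdd_above ?Xa"
    proof (rule bdd_aboveI)
      fix x assume "x \<in> ?Xa"
      then obtain D where D: "x = dsize \<A> D" "D \<in> all_structs Sig ar" "ssize Sig D \<le> m" by blast
      show "x \<le> (1 + N + N * card (univ \<A>)) * (1 + N + card (univ \<A>))"
        unfolding D(1) N_def using dsize_bound[OF fS fA nA D(2,3)] by simp
    qed
    have "Sup ?Xp \<le> Sup ?Xa"
    proof (cases "?Xp = {}")
      case True show ?thesis unfolding True by simp
    next
      case False
      show ?thesis
      proof (rule cSup_least[OF False])
        fix x assume "x \<in> ?Xp"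
        then obtain C where C: "x = dsize (indiv \<A>) C" "C \<in> part_class Sig ar (univ \<A>)"
          "ssize (sig_id Sig (univ \<A>)) C \<le> m" by blast
        have fC: "finite (univ C)" using C(2) unfolding part_class_def is_struct_def by blast
        have "red C \<in> all_structs Sig ar" using red_all[OF C(2)] .
        moreover have "ssize Sig (red C) \<le> m" using red_size[OF fS fA, of C] C(3) by linarith
        ultimately have inX: "dsize \<A> (red C) \<in> ?Xa" by blast
        have "x \<le> dsize \<A> (red C)" using C(1) dsize_indiv_le[OF fA nA fC] by simp
        also have "\<dots> \<le> Sup ?Xa" using inX bdd by (rule cSup_upper)
        finally show "x \<le> Sup ?Xa" .
      qed
    qed
    thus ?thesis unfolding dclass_def .
  qed
  show ?thesis unfolding bigomega_def
  proof (intro CollectI exI[of _ 1] conjI)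
    show "(1::real) > 0" by simp
    show "\<forall>\<^sub>F x in at_top. 1 * norm (real (dclass (sig_id Sig (univ \<A>)) (indiv \<A>) (part_class Sig ar (univ \<A>)) x))
        \<le> norm (real (dclass Sig \<A> (all_structs Sig ar) x))"
      using le by (intro always_eventually allI) simp
  qed
qed

end
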